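(* In the setting below, there is a constant $C_1>0$ depending only on $K$ such that for each $f\in D_I$ and $i\in I$ there exist $g=\sum_{n\ge0}g_nt^n\in D_i'$ and $h=\sum_{n\ge0}h_nt^n\in D_i$ with $f=g+h$, $|g|_t\le|f|_t$ and $|h|_t\le|f|_t$; moreover, if $i=1$ then $\|h_n\|<C_1$ for all $n\ge0$, and if $i\ne1$ then $\|g_n\|<C_1$ for all $n\ge0$.
   Context: Let $K$ be a number field with ring of integers $R$; for $x\in K$ put $\|x\|=\max_{\sigma\in\operatorname{Hom}(K,\mathbb{C})}|\sigma(x)|$, and for a subring $S\subseteq K$ let $S\{t\}=\{\sum_{n\ge0}a_nt^n\in S[[t]]:\limsup_n\|a_n\|^{1/n}\le1\}$. Let $I$ be a finite index set containing the symbol $1$, and for each $i\in I$ let $a_i\in R$ be nonzero and not a unit, with $a_iR+a_jR=R$ for distinct $i,j\in I$. For $J\subseteq I$ let $a_J=\prod_{j\in J}a_j$ ($a_\emptyset=1$), $R_J=R[1/a_J]$, and $D_J=R_J\{t\}$ if $1\notin J$, $D_J=R_J[[t]]$ if $1\in J$; all are subrings of $D_I=R_I[[t]]$. For $i\in I$ put $D_i=D_{I\setminus\{i\}}$ and $D_i'=D_{\{i\}}$. $|\cdot|_t=e^{-v_t}$ is the $t$-adic absolute value on $R_I[[t]]$. *)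

theory Defs
  imports "HOL-Analysis.Analysis" "HOL-Computational_Algebra.Polynomial"
    "HOL-Computational_Algebra.Formal_Power_Series" "HOL-Library.Liminf_Limsup"
begin

text \<open>A number field is modelled as a subfield K of the complex numbers that is
  finite-dimensional over the rationals.\<close>
definition number_field :: "complex set \<Rightarrow> bool" where
  "number_field K \<longleftrightarrow>
     0 \<in> K \<and> 1 \<in> K \<and>
     (\<forall>x\<in>K. \<forall>y\<in>K. x + y \<in> K \<and> x * y \<in> K) \<and>
     (\<forall>x\<in>K. - x \<in> K \<and> inverse x \<in> K) \<and>
     (\<exists>B. finite B \<and> B \<subseteq> K \<and>
        (\<forall>x\<in>K. \<exists>c. (\<forall>b\<in>B. c b \<in> \<rat>) \<and> x = (\<Sum>b\<in>B. c b * b)))"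

text \<open>Field embeddings K \<rightarrow> C (made extensional: zero outside K).\<close>
definition embeddings :: "complex set \<Rightarrow> (complex \<Rightarrow> complex) set" where
  "embeddings K = {\<sigma>. (\<forall>x\<in>K. \<forall>y\<in>K. \<sigma> (x + y) = \<sigma> x + \<sigma> y \<and> \<sigma> (x * y) = \<sigma> x * \<sigma> y)
      \<and> \<sigma> 1 = 1 \<and> (\<forall>x. x \<notin> K \<longrightarrow> \<sigma> x = 0)}"

definition house :: "complex set \<Rightarrow> complex \<Rightarrow> real" where
  "house K x = Max ((\<lambda>\<sigma>. cmod (\<sigma> x)) ` embeddings K)"

definition algebraic_integer :: "complex \<Rightarrow> bool" where
  "algebraic_integer x \<longleftrightarrow>
     (\<exists>p :: int poly. lead_coeff p = 1 \<and> poly (map_poly of_int p) x = 0)"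

definition ring_of_integers :: "complex set \<Rightarrow> complex set" where
  "ring_of_integers K = {x \<in> K. algebraic_integer x}"

definition aJ :: "(nat \<Rightarrow> complex) \<Rightarrow> nat set \<Rightarrow> complex" where
  "aJ a J = (\<Prod>j\<in>J. a j)"

definition RJ :: "complex set \<Rightarrow> (nat \<Rightarrow> complex) \<Rightarrow> nat set \<Rightarrow> complex set" where
  "RJ K a J = {r / (aJ a J) ^ k | r k. r \<in> ring_of_integers K}"

definition small_growth :: "complex set \<Rightarrow> complex fps \<Rightarrow> bool" where
  "small_growth K f \<longleftrightarrow>
     limsup (\<lambda>n. ereal (root n (house K (fps_nth f n)))) \<le> 1"

definition DJ :: "complex set \<Rightarrow> (nat \<Rightarrow> complex) \<Rightarrow> nat set \<Rightarrow> complex fps set" where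
  "DJ K a J = {f. (\<forall>n. fps_nth f n \<in> RJ K a J) \<and> (1 \<notin> J \<longrightarrow> small_growth K f)}"

definition tabs :: "complex fps \<Rightarrow> real" where
  "tabs f = (if f = 0 then 0 else exp (- real (subdegree f)))"

end

theory Submission
  imports Defs "Jordan_Normal_Form.Char_Poly"
begin

lemma key_eig:
  fixes A :: "int mat" and V :: "complex vec"
  assumes A: "A \<in> carrier_mat N N" and V: "V \<in> carrier_vec N" "V \<noteq> 0\<^sub>v N"
    and eq: "map_mat of_int A *\<^sub>v V = w \<cdot>\<^sub>v V"
  shows "algebraic_integer w"
proof -
  have A': "map_mat of_int A \<in> carrier_mat N N" using A by simp
  have "eigenvector (map_mat of_int A) V w"
    unfolding eigenvector_def using A V eq by auto
  hence "eigenvalue (map_mat of_int A) w" unfolding eigenvalue_def by blast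
  hence "poly (char_poly (map_mat of_int A)) w = 0"
    by (rule iffD1[OF eigenvalue_root_char_poly[OF A']])
  moreover have "char_poly (map_mat (of_int::int\<Rightarrow>complex) A) = map_poly of_int (char_poly A)"
    by (rule of_int_hom.char_poly_hom[OF A])
  ultimately have "poly (map_poly of_int (char_poly A)) w = 0" by simp
  moreover have "lead_coeff (char_poly A) = 1"
    using degree_monic_char_poly[OF A] by simp
  ultimately show ?thesis unfolding algebraic_integer_def by blast
qed

lemma key:
  fixes S :: "'i set" and v :: "'i \<Rightarrow> complex"
  assumes fin: "finite S" and nz: "\<exists>s\<in>S. v s \<noteq> 0"
    and rel: "\<forall>s\<in>S. \<exists>c. w * v s = (\<Sum>t\<in>S. of_int (c t) * v t)"
  shows "algebraic_integer w"
proof -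
  obtain h where h: "bij_betw h {0..<card S} S" using ex_bij_betw_nat_finite[OF fin] by blast
  define N where "N = card S"
  obtain C where C: "\<forall>s\<in>S. w * v s = (\<Sum>t\<in>S. of_int (C s t) * v t)"
    using rel by metis
  define A where "A = mat N N (\<lambda>(k,l). C (h k) (h l))"
  define V where "V = vec N (\<lambda>k. v (h k))"
  have A: "A \<in> carrier_mat N N" unfolding A_def by simp
  have V: "V \<in> carrier_vec N" unfolding V_def by simp
  have hk: "k < N \<Longrightarrow> h k \<in> S" for k using h unfolding N_def bij_betw_def by auto
  have reidx: "(\<Sum>l<N. g (h l)) = (\<Sum>t\<in>S. g t)" for g :: "'i \<Rightarrow> complex"
  proof -
    have "(\<Sum>l\<in>{0..<N}. g (h l)) = (\<Sum>t\<in>S. g t)"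
      using sum.reindex_bij_betw[OF h[folded N_def], of g] by simp
    thus ?thesis by (simp add: atLeast0LessThan)
  qed
  have V0: "V \<noteq> 0\<^sub>v N"
  proof
    assume "V = 0\<^sub>v N"
    then have "\<forall>k<N. v (h k) = 0" unfolding V_def by (metis index_vec index_zero_vec(1))
    moreover obtain s where s: "s \<in> S" "v s \<noteq> 0" using nz by blast
    moreover have "s \<in> h ` {0..<N}" using h s(1) unfolding N_def bij_betw_def by auto
    then obtain k where "k < N" "h k = s" by auto
    ultimately show False by auto
  qed
  have eq: "map_mat of_int A *\<^sub>v V = w \<cdot>\<^sub>v V"
  proof (rule eq_vecI)
    fix k assume k: "k < dim_vec (w \<cdot>\<^sub>v V)"
    hence k: "k < N" using V by simp
    have "(map_mat of_int A *\<^sub>v V) $ k = (\<Sum>l<N. of_int (C (h k) (h l)) * v (h l))"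
      using k A V unfolding A_def V_def
      by (simp add: mult_mat_vec_def scalar_prod_def atLeast0LessThan)
    also have "\<dots> = (\<Sum>t\<in>S. of_int (C (h k) t) * v t)" by (rule reidx)
    also have "\<dots> = w * v (h k)" using C hk[OF k] by simp
    also have "\<dots> = (w \<cdot>\<^sub>v V) $ k" using k unfolding V_def by simp
    finally show "(map_mat of_int A *\<^sub>v V) $ k = (w \<cdot>\<^sub>v V) $ k" .
  qed (use A V in simp)
  show ?thesis by (rule key_eig[OF A V V0 eq])
qed

lemma ai_powspan:
  assumes "algebraic_integer x"
  shows "\<exists>n>0. \<forall>k. \<exists>c::nat\<Rightarrow>int. x ^ k = (\<Sum>i<n. of_int (c i) * x ^ i)"
proof -
  obtain p :: "int poly" where p1: "lead_coeff p = 1" and p0: "poly (map_poly of_int p) x = 0"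
    using assms unfolding algebraic_integer_def by blast
  define n where "n = degree p"
  have n0: "n > 0"
  proof (rule ccontr)
    assume "\<not> n > 0"
    hence "degree p = 0" unfolding n_def by simp
    hence "p = [:1:]" using p1 by (metis leading_coeff_0_iff pCons_0_0 degree_eq_zeroE lead_coeff_pCons(2) one_pCons)
    thus False using p0 by simp
  qed
  have sum0: "(\<Sum>i\<le>n. of_int (coeff p i) * x ^ i) = 0"
    using p0 unfolding poly_altdef n_def by (simp add: coeff_map_poly degree_map_poly)
  have xn: "x ^ n = - (\<Sum>i<n. of_int (coeff p i) * x ^ i)"
    using sum0 p1 unfolding n_def by (simp add: lessThan_Suc_atMost[symmetric] eq_neg_iff_add_eq_0 add.commute)
  obtain m where m: "n = Suc m" using n0 gr0_implies_Suc by blast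
  have "\<exists>c::nat\<Rightarrow>int. x ^ k = (\<Sum>i<n. of_int (c i) * x ^ i)" for k
  proof (induction k)
    case 0
    have "(\<Sum>i<n. of_int (if i = 0 then 1 else 0) * x ^ i) = (\<Sum>i<n. if i = 0 then 1 else (0::complex))"
      by (rule sum.cong) auto
    also have "\<dots> = 1" using n0 by (simp add: sum.delta)
    finally show ?case by (intro exI[of _ "\<lambda>i. if i = 0 then 1 else 0"]) simp
  next
    case (Suc k)
    then obtain c where c: "x ^ k = (\<Sum>i<n. of_int (c i) * x ^ i)" by blast
    define d where "d = (\<lambda>i. (if i = 0 then 0 else c (i - 1)) - c m * coeff p i)"
    have "x ^ Suc k = (\<Sum>i<Suc m. of_int (c i) * x ^ Suc i)"
      using c m by (simp add: sum_distrib_left algebra_simps)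
    also have "\<dots> = (\<Sum>i<m. of_int (c i) * x ^ Suc i) + of_int (c m) * x ^ n"
      using m by simp
    also have "\<dots> = (\<Sum>i<m. of_int (c i) * x ^ Suc i) - (\<Sum>i<n. of_int (c m * coeff p i) * x ^ i)"
      by (simp add: xn sum_distrib_left algebra_simps)
    also have "(\<Sum>i<m. of_int (c i) * x ^ Suc i) = (\<Sum>i<n. of_int (if i = 0 then 0 else c (i - 1)) * x ^ i)"
      unfolding m by (subst sum.lessThan_Suc_shift) simp
    finally have "x ^ Suc k = (\<Sum>i<n. of_int (d i) * x ^ i)"
      unfolding d_def by (simp add: sum_subtractf algebra_simps)
    thus ?case by blast
  qed
  thus ?thesis using n0 by blast
qed

lemma ai_closed:
  assumes x: "algebraic_integer x" and y: "algebraic_integer y"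
  shows "algebraic_integer (x + y)" "algebraic_integer (x * y)"
proof -
  obtain n where n: "n > 0" "\<forall>k. \<exists>c::nat\<Rightarrow>int. x ^ k = (\<Sum>i<n. of_int (c i) * x ^ i)"
    using ai_powspan[OF x] by blast
  obtain m where m: "m > 0" "\<forall>k. \<exists>c::nat\<Rightarrow>int. y ^ k = (\<Sum>i<m. of_int (c i) * y ^ i)"
    using ai_powspan[OF y] by blast
  define S where "S = {..<n} \<times> {..<m}"
  define v where "v = (\<lambda>(i::nat, j::nat). x ^ i * y ^ j)"
  define Sp where "Sp = {z. \<exists>c::nat\<times>nat\<Rightarrow>int. z = (\<Sum>t\<in>S. of_int (c t) * v t)}"
  have finS: "finite S" unfolding S_def by simp
  have nz: "\<exists>s\<in>S. v s \<noteq> 0" using n m unfolding S_def v_def by (intro bexI[of _ "(0,0)"]) auto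
  have sp_add: "z1 \<in> Sp \<Longrightarrow> z2 \<in> Sp \<Longrightarrow> z1 + z2 \<in> Sp" for z1 z2
  proof -
    assume "z1 \<in> Sp" "z2 \<in> Sp"
    then obtain c1 c2 where "z1 = (\<Sum>t\<in>S. of_int (c1 t) * v t)" "z2 = (\<Sum>t\<in>S. of_int (c2 t) * v t)"
      unfolding Sp_def by blast
    hence "z1 + z2 = (\<Sum>t\<in>S. of_int ((\<lambda>t. c1 t + c2 t) t) * v t)"
      by (simp add: sum.distrib algebra_simps)
    thus ?thesis unfolding Sp_def mem_Collect_eq by (rule exI[where x="\<lambda>t. c1 t + c2 t"])
  qed
  have sp_all: "x ^ i * y ^ j \<in> Sp" for i j
  proof -
    obtain a where a: "x ^ i = (\<Sum>k<n. of_int (a k) * x ^ k)" using n by blast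
    obtain b where b: "y ^ j = (\<Sum>k<m. of_int (b k) * y ^ k)" using m by blast
    have "x ^ i * y ^ j = (\<Sum>k<n. \<Sum>l<m. (of_int (a k) * x ^ k) * (of_int (b l) * y ^ l))"
      unfolding a b by (rule sum_product)
    also have "\<dots> = (\<Sum>t\<in>S. of_int ((\<lambda>(k,l). a k * b l) t) * v t)"
      unfolding S_def v_def sum.cartesian_product by (rule sum.cong) (auto simp: algebra_simps)
    finally show ?thesis unfolding Sp_def by blast
  qed
  show "algebraic_integer (x + y)"
  proof (rule key[OF finS nz], intro ballI)
    fix s assume "s \<in> S"
    obtain i j where s: "s = (i, j)" by fastforce
    have "(x + y) * v s = x ^ Suc i * y ^ j + x ^ i * y ^ Suc j"
      unfolding s v_def by (simp add: algebra_simps)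
    also have "\<dots> \<in> Sp" by (intro sp_add sp_all)
    finally show "\<exists>c. (x + y) * v s = (\<Sum>t\<in>S. of_int (c t) * v t)" unfolding Sp_def by blast
  qed
  show "algebraic_integer (x * y)"
  proof (rule key[OF finS nz], intro ballI)
    fix s assume "s \<in> S"
    obtain i j where s: "s = (i, j)" by fastforce
    have "(x * y) * v s = x ^ Suc i * y ^ Suc j"
      unfolding s v_def by (simp add: algebra_simps)
    also have "\<dots> \<in> Sp" by (intro sp_all)
    finally show "\<exists>c. (x * y) * v s = (\<Sum>t\<in>S. of_int (c t) * v t)" unfolding Sp_def by blast
  qed
qed

lemma ai_alt: "algebraic_integer x \<longleftrightarrow> algebraic_int x"
  unfolding algebraic_integer_def algebraic_int_altdef_ipoly by auto

lemma ai_of_int [simp]: "algebraic_integer (of_int k)" unfolding ai_alt by simp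
lemma ai_minus: "algebraic_integer x \<Longrightarrow> algebraic_integer (- x)" unfolding ai_alt by simp

context
  fixes K :: "complex set"
  assumes nf: "number_field K"
begin

lemma nf_props: "0 \<in> K \<and> 1 \<in> K \<and> (\<forall>x\<in>K. \<forall>y\<in>K. x + y \<in> K \<and> x * y \<in> K) \<and> (\<forall>x\<in>K. - x \<in> K \<and> inverse x \<in> K)"
  using nf unfolding number_field_def by (elim conjE) (intro conjI; assumption)

lemma nf_0: "0 \<in> K" using nf_props by (elim conjE)
lemma nf_1: "1 \<in> K" using nf_props by (elim conjE)
lemma nf_add: "x \<in> K \<Longrightarrow> y \<in> K \<Longrightarrow> x + y \<in> K" using nf_props by (elim conjE) simp
lemma nf_mult: "x \<in> K \<Longrightarrow> y \<in> K \<Longrightarrow> x * y \<in> K" using nf_props by (elim conjE) simp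
lemma nf_uminus: "x \<in> K \<Longrightarrow> - x \<in> K" using nf_props by (elim conjE) simp
lemma nf_inverse: "x \<in> K \<Longrightarrow> inverse x \<in> K" using nf_props by (elim conjE) simp

lemma nf_basis: "\<exists>B. finite B \<and> B \<subseteq> K \<and>
        (\<forall>x\<in>K. \<exists>c. (\<forall>b\<in>B. c b \<in> \<rat>) \<and> x = (\<Sum>b\<in>B. c b * b))"
  using nf unfolding number_field_def by (elim conjE) assumption

lemma nf_diff: "x \<in> K \<Longrightarrow> y \<in> K \<Longrightarrow> x - y \<in> K"
proof -
  assume "x \<in> K" "y \<in> K"
  hence "x + - y \<in> K" by (intro nf_add nf_uminus)
  thus ?thesis by simp
qed

lemma nf_divide: "x \<in> K \<Longrightarrow> y \<in> K \<Longrightarrow> x / y \<in> K"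
proof -
  assume "x \<in> K" "y \<in> K"
  hence "x * inverse y \<in> K" by (intro nf_mult nf_inverse)
  thus ?thesis by (simp add: divide_inverse)
qed

lemma nf_of_nat: "of_nat n \<in> K"
  by (induction n) (auto intro: nf_add nf_0 nf_1)

lemma nf_of_int: "of_int k \<in> K"
  by (cases k rule: int_cases) (auto intro: nf_uminus nf_of_nat simp del: of_nat_Suc)

lemma nf_Rats: "q \<in> \<rat> \<Longrightarrow> q \<in> K"
  by (erule Rats_cases') (auto intro: nf_divide nf_of_int)

lemma nf_sum: "(\<And>a. a \<in> A \<Longrightarrow> f a \<in> K) \<Longrightarrow> sum f A \<in> K"
  by (induction A rule: infinite_finite_induct) (auto intro: nf_add nf_0)

lemma nf_prod: "(\<And>a. a \<in> A \<Longrightarrow> f a \<in> K) \<Longrightarrow> prod f A \<in> K"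
  by (induction A rule: infinite_finite_induct) (auto intro: nf_mult nf_1)

lemma nf_power: "x \<in> K \<Longrightarrow> x ^ n \<in> K"
  by (induction n) (auto intro: nf_mult nf_1)

subsection \<open>Embeddings\<close>

context
  fixes \<sigma> assumes emb: "\<sigma> \<in> embeddings K"
begin

lemma emb_add: "x \<in> K \<Longrightarrow> y \<in> K \<Longrightarrow> \<sigma> (x + y) = \<sigma> x + \<sigma> y"
  and emb_mult: "x \<in> K \<Longrightarrow> y \<in> K \<Longrightarrow> \<sigma> (x * y) = \<sigma> x * \<sigma> y"
  and emb_1: "\<sigma> 1 = 1"
  and emb_out: "x \<notin> K \<Longrightarrow> \<sigma> x = 0"
  using emb unfolding embeddings_def by auto

lemma emb_0: "\<sigma> 0 = 0"
  using emb_add[OF nf_0 nf_0] by simp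

lemma emb_uminus: "x \<in> K \<Longrightarrow> \<sigma> (- x) = - \<sigma> x"
proof -
  assume x: "x \<in> K"
  have "\<sigma> x + \<sigma> (- x) = 0" using emb_add[OF x nf_uminus[OF x]] emb_0 by simp
  thus ?thesis by (metis neg_eq_iff_add_eq_0)
qed

lemma emb_diff: "x \<in> K \<Longrightarrow> y \<in> K \<Longrightarrow> \<sigma> (x - y) = \<sigma> x - \<sigma> y"
  using emb_add[OF _ nf_uminus, of x y] emb_uminus[of y] by simp

lemma emb_of_nat: "\<sigma> (of_nat n) = of_nat n"
  by (induction n) (simp_all add: emb_0 emb_1 emb_add nf_of_nat nf_1)

lemma emb_of_int: "\<sigma> (of_int k) = of_int k"
  by (cases k rule: int_cases) (auto simp: emb_uminus emb_of_nat nf_of_nat simp del: of_nat_Suc)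

lemma emb_Rats: "q \<in> \<rat> \<Longrightarrow> \<sigma> q = q"
proof (erule Rats_cases')
  fix a b :: int assume b: "b > 0" and q: "q = of_int a / of_int b"
  have qK: "q \<in> K" using q nf_divide nf_of_int by simp
  have "\<sigma> q * of_int b = \<sigma> (q * of_int b)"
    using emb_mult[OF qK nf_of_int, of b] emb_of_int[of b] by simp
  also have "q * of_int b = of_int a" using q b by simp
  finally have "\<sigma> q * of_int b = q * of_int b" using emb_of_int q b by simp
  moreover have "(of_int b :: complex) \<noteq> 0" using b by simp
  ultimately show "\<sigma> q = q" by (metis mult_cancel_right)
qed

lemma emb_sum: "(\<And>a. a \<in> A \<Longrightarrow> f a \<in> K) \<Longrightarrow> \<sigma> (sum f A) = (\<Sum>a\<in>A. \<sigma> (f a))"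
  by (induction A rule: infinite_finite_induct) (auto simp: emb_0 emb_add nf_sum)

lemma emb_power: "x \<in> K \<Longrightarrow> \<sigma> (x ^ n) = \<sigma> x ^ n"
  by (induction n) (auto simp: emb_1 emb_mult nf_power)

lemma emb_ratmult: "q \<in> \<rat> \<Longrightarrow> x \<in> K \<Longrightarrow> \<sigma> (q * x) = q * \<sigma> x"
  using emb_mult[OF nf_Rats] emb_Rats by simp

lemma emb_poly: "z \<in> K \<Longrightarrow> \<sigma> (poly (map_poly of_int p) z) = poly (map_poly of_int p) (\<sigma> z)"
proof -
  assume z: "z \<in> K"
  have "\<sigma> (poly (map_poly of_int p) z) = \<sigma> (\<Sum>i\<le>degree p. of_int (coeff p i) * z ^ i)"
    by (simp add: poly_altdef coeff_map_poly of_int_hom.degree_map_poly_hom)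
  also have "\<dots> = (\<Sum>i\<le>degree p. of_int (coeff p i) * \<sigma> z ^ i)"
    using z by (subst emb_sum) (auto intro!: nf_mult nf_of_int nf_power simp: emb_mult nf_of_int nf_power emb_of_int emb_power)
  also have "\<dots> = poly (map_poly of_int p) (\<sigma> z)"
    by (simp add: poly_altdef coeff_map_poly of_int_hom.degree_map_poly_hom)
  finally show ?thesis .
qed

end

lemma emb_id: "(\<lambda>x. if x \<in> K then x else 0) \<in> embeddings K"
  unfolding embeddings_def using nf_add nf_mult nf_1 by auto

lemma emb_determined:
  assumes B: "finite B" "B \<subseteq> K" "\<forall>x\<in>K. \<exists>c. (\<forall>b\<in>B. c b \<in> \<rat>) \<and> x = (\<Sum>b\<in>B. c b * b)"
    and s: "\<sigma> \<in> embeddings K" and t: "\<tau> \<in> embeddings K" and eq: "\<forall>b\<in>B. \<sigma> b = \<tau> b"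
  shows "\<sigma> = \<tau>"
proof
  fix x show "\<sigma> x = \<tau> x"
  proof (cases "x \<in> K")
    case True
    then obtain c where c: "\<forall>b\<in>B. c b \<in> \<rat>" "x = (\<Sum>b\<in>B. c b * b)" using B by blast
    have bk: "\<And>b. b \<in> B \<Longrightarrow> c b * b \<in> K" using c B nf_mult nf_Rats by auto
    have "\<sigma> x = (\<Sum>b\<in>B. \<sigma> (c b * b))" using c(2) emb_sum[OF s, of B "\<lambda>b. c b * b"] bk by simp
    also have "\<dots> = (\<Sum>b\<in>B. c b * \<sigma> b)"
      by (rule sum.cong) (use c B emb_ratmult[OF s] in auto)
    also have "\<dots> = (\<Sum>b\<in>B. c b * \<tau> b)" using eq by simp
    also have "\<dots> = (\<Sum>b\<in>B. \<tau> (c b * b))"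
      by (rule sum.cong) (use c B emb_ratmult[OF t] in auto)
    also have "\<dots> = \<tau> x" using c(2) emb_sum[OF t, of B "\<lambda>b. c b * b"] bk by simp
    finally show ?thesis .
  next
    case False thus ?thesis using emb_out[OF s] emb_out[OF t] by simp
  qed
qed

lemma common_denom:
  fixes q :: "'a \<Rightarrow> complex"
  assumes "finite S" "\<forall>s\<in>S. q s \<in> \<rat>"
  shows "\<exists>D::int. D > 0 \<and> (\<forall>s\<in>S. of_int D * q s \<in> \<int>)"
  using assms
proof (induction S rule: finite_induct)
  case empty show ?case by (intro exI[of _ 1]) simp
next
  case (insert x F)
  then obtain D where D: "D > 0" "\<forall>s\<in>F. of_int D * q s \<in> \<int>" by auto
  from insert have qx: "q x \<in> \<rat>" by simp
  obtain a b where ab: "b > 0" "q x = of_int a / of_int b" using Rats_cases'[OF qx] by metis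
  have "\<forall>s\<in>insert x F. of_int (D * b) * q s \<in> \<int>"
  proof
    fix s assume "s \<in> insert x F"
    then consider "s = x" | "s \<in> F" by blast
    thus "of_int (D * b) * q s \<in> \<int>"
    proof cases
      case 1 thus ?thesis using ab by (simp add: field_simps)
    next
      case 2
      have "of_int (D * b) * q s = of_int b * (of_int D * q s)" by simp
      thus ?thesis using D 2 by (metis Ints_mult Ints_of_int)
    qed
  qed
  thus ?case using D ab by (intro exI[of _ "D * b"]) simp
qed

lemma int_multiple:
  assumes B: "finite B" "B \<subseteq> K" "\<forall>x\<in>K. \<exists>c. (\<forall>b\<in>B. c b \<in> \<rat>) \<and> x = (\<Sum>b\<in>B. c b * b)"
    and x: "x \<in> K"
  shows "\<exists>D::int. D > 0 \<and> algebraic_integer (of_int D * x)"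
proof -
  have "\<forall>s\<in>B. \<exists>c. (\<forall>b\<in>B. c b \<in> \<rat>) \<and> x * s = (\<Sum>b\<in>B. c b * b)"
    using B x nf_mult by blast
  then obtain c where c: "\<forall>s\<in>B. (\<forall>b\<in>B. c s b \<in> \<rat>) \<and> x * s = (\<Sum>b\<in>B. c s b * b)"
    by metis
  obtain D where D: "D > 0" "\<forall>st\<in>B \<times> B. of_int D * (\<lambda>(s,t). c s t) st \<in> \<int>"
  proof -
    have "\<forall>st\<in>B \<times> B. (\<lambda>(s,t). c s t) st \<in> \<rat>" using c by auto
    moreover have "finite (B \<times> B)" using B(1) by simp
    ultimately show ?thesis using common_denom that by blast
  qed
  have nz: "\<exists>s\<in>B. id s \<noteq> 0"
  proof (rule ccontr)
    assume "\<not> ?thesis"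
    hence z: "\<forall>s\<in>B. s = 0" by simp
    obtain c1 where "1 = (\<Sum>b\<in>B. c1 b * b)" using B nf_1 by blast
    moreover have "(\<Sum>b\<in>B. c1 b * b) = 0" using z by (intro sum.neutral) simp
    ultimately show False by simp
  qed
  have "algebraic_integer (of_int D * x)"
  proof (rule key[OF B(1) nz], intro ballI)
    fix s assume s: "s \<in> B"
    have "\<forall>t\<in>B. of_int D * c s t \<in> \<int>" using D s by auto
    hence "\<forall>t\<in>B. \<exists>k. of_int D * c s t = of_int k"
      unfolding Ints_def by (metis rangeE)
    then obtain k where k: "\<forall>t\<in>B. of_int D * c s t = of_int (k t)" by metis
    have "of_int D * x * id s = of_int D * (x * s)" by simp
    also have "\<dots> = (\<Sum>t\<in>B. (of_int D * c s t) * t)"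
      using c s by (simp add: sum_distrib_left mult.assoc)
    also have "\<dots> = (\<Sum>t\<in>B. of_int (k t) * id t)" using k by simp
    finally show "\<exists>k. of_int D * x * id s = (\<Sum>t\<in>B. of_int (k t) * id t)" by blast
  qed
  thus ?thesis using D by blast
qed

lemma emb_finite: "finite (embeddings K)"
proof -
  obtain B where B: "finite B" "B \<subseteq> K" "\<forall>x\<in>K. \<exists>c. (\<forall>b\<in>B. c b \<in> \<rat>) \<and> x = (\<Sum>b\<in>B. c b * b)"
    using nf_basis by blast
  have "\<forall>b\<in>B. \<exists>D p. D > (0::int) \<and> lead_coeff p = 1 \<and> poly (map_poly of_int p) (of_int D * b) = 0"
    using int_multiple[OF B] B(2) unfolding algebraic_integer_def by blast
  then obtain D p where Dp: "\<forall>b\<in>B. D b > (0::int) \<and> lead_coeff (p b) = 1 \<and>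
      poly (map_poly of_int (p b)) (of_int (D b) * b) = 0" by metis
  define T where "T = (\<lambda>b. (\<lambda>y::complex. y / of_int (D b)) ` {y. poly (map_poly of_int (p b)) y = 0})"
  have finT: "finite (T b)" if "b \<in> B" for b
  proof -
    have "p b \<noteq> 0" using Dp that by auto
    hence "map_poly (of_int :: int \<Rightarrow> complex) (p b) \<noteq> 0" by simp
    from poly_roots_finite[OF this] show ?thesis unfolding T_def by (rule finite_imageI)
  qed
  have img: "(\<lambda>\<sigma>. restrict \<sigma> B) ` embeddings K \<subseteq> PiE B T"
  proof (rule image_subsetI)
    fix \<sigma> assume s: "\<sigma> \<in> embeddings K"
    show "restrict \<sigma> B \<in> PiE B T"
    proof (rule restrict_PiE_iff[THEN iffD2], intro ballI)
      fix b assume b: "b \<in> B"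
      have bK: "b \<in> K" using b B by auto
      have "poly (map_poly of_int (p b)) (\<sigma> (of_int (D b) * b)) = \<sigma> (poly (map_poly of_int (p b)) (of_int (D b) * b))"
        using emb_poly[OF s] bK nf_mult nf_of_int by simp
      also have "\<dots> = 0" using Dp b emb_0[OF s] by simp
      finally have "poly (map_poly of_int (p b)) (of_int (D b) * \<sigma> b) = 0"
        using emb_mult[OF s nf_of_int bK] emb_of_int[OF s] by simp
      hence mem: "of_int (D b) * \<sigma> b \<in> {y. poly (map_poly of_int (p b)) y = 0}" by simp
      have "D b \<noteq> 0" using Dp b by auto
      hence eqb: "\<sigma> b = (of_int (D b) * \<sigma> b) / of_int (D b)" by simp
      show "\<sigma> b \<in> T b" unfolding T_def by (rule image_eqI[where f="\<lambda>y::complex. y / of_int (D b)", OF eqb mem])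
    qed
  qed
  have inj: "inj_on (\<lambda>\<sigma>. restrict \<sigma> B) (embeddings K)"
  proof (rule inj_onI)
    fix \<sigma> \<tau> assume s: "\<sigma> \<in> embeddings K" and t: "\<tau> \<in> embeddings K"
      and eq: "restrict \<sigma> B = restrict \<tau> B"
    have "\<forall>b\<in>B. \<sigma> b = \<tau> b"
    proof
      fix b assume "b \<in> B"
      thus "\<sigma> b = \<tau> b" using fun_cong[OF eq, of b] by simp
    qed
    thus "\<sigma> = \<tau>" by (rule emb_determined[OF B s t])
  qed
  show ?thesis
    by (rule inj_on_finite[OF inj img finite_PiE[OF B(1) finT]])
qed

lemma house_ge: "\<sigma> \<in> embeddings K \<Longrightarrow> cmod (\<sigma> x) \<le> house K x"
  unfolding house_def by (rule Max_ge) (use emb_finite in auto)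

lemma house_le: "(\<And>\<sigma>. \<sigma> \<in> embeddings K \<Longrightarrow> cmod (\<sigma> x) \<le> C) \<Longrightarrow> house K x \<le> C"
  unfolding house_def using emb_finite emb_id by (subst Max_le_iff) auto

lemma house_nonneg: "0 \<le> house K x"
  using house_ge[OF emb_id, of x] by (meson norm_ge_zero order_trans)

lemma house_0: "house K 0 = 0"
proof -
  have "house K 0 \<le> 0" by (rule house_le) (simp add: emb_0)
  thus ?thesis using house_nonneg[of 0] by linarith
qed

end

context
  fixes K :: "complex set"
  assumes nf: "number_field K"
begin

abbreviation "OK \<equiv> ring_of_integers K"

lemma O_K: "x \<in> OK \<Longrightarrow> x \<in> K" and O_ai: "x \<in> OK \<Longrightarrow> algebraic_integer x"
  unfolding ring_of_integers_def by auto

lemma O_I: "x \<in> K \<Longrightarrow> algebraic_integer x \<Longrightarrow> x \<in> OK"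
  unfolding ring_of_integers_def by auto

lemma O_add: "x \<in> OK \<Longrightarrow> y \<in> OK \<Longrightarrow> x + y \<in> OK"
  by (rule O_I[OF nf_add[OF nf O_K O_K] ai_closed(1)[OF O_ai O_ai]])

lemma O_mult: "x \<in> OK \<Longrightarrow> y \<in> OK \<Longrightarrow> x * y \<in> OK"
  by (rule O_I[OF nf_mult[OF nf O_K O_K] ai_closed(2)[OF O_ai O_ai]])

lemma O_uminus: "x \<in> OK \<Longrightarrow> - x \<in> OK"
  by (rule O_I[OF nf_uminus[OF nf O_K] ai_minus[OF O_ai]])

lemma O_diff: "x \<in> OK \<Longrightarrow> y \<in> OK \<Longrightarrow> x - y \<in> OK"
  using O_add[OF _ O_uminus, of x y] by simp

lemma O_of_int: "of_int k \<in> OK"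
  by (rule O_I[OF nf_of_int[OF nf] ai_of_int])

lemma O_0: "0 \<in> OK" using O_of_int[of 0] by simp
lemma O_1: "1 \<in> OK" using O_of_int[of 1] by simp

lemma O_sum: "(\<And>a. a \<in> A \<Longrightarrow> f a \<in> OK) \<Longrightarrow> sum f A \<in> OK"
  by (induction A rule: infinite_finite_induct) (simp_all add: O_0 O_add)

lemma O_prod: "(\<And>a. a \<in> A \<Longrightarrow> f a \<in> OK) \<Longrightarrow> prod f A \<in> OK"
  by (induction A rule: infinite_finite_induct) (simp_all add: O_1 O_mult)

lemma O_power: "x \<in> OK \<Longrightarrow> x ^ n \<in> OK"
  by (induction n) (simp_all add: O_1 O_mult)

lemma lattice: "\<exists>C0. \<forall>x\<in>K. \<exists>\<rho>\<in>OK. house K (x - \<rho>) \<le> C0"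
proof -
  obtain B where B: "finite B" "B \<subseteq> K" "\<forall>x\<in>K. \<exists>c. (\<forall>b\<in>B. c b \<in> \<rat>) \<and> x = (\<Sum>b\<in>B. c b * b)"
    using nf_basis[OF nf] by blast
  have "\<forall>b\<in>B. \<exists>D::int. D > 0 \<and> algebraic_integer (of_int D * b)"
    using int_multiple[OF nf B] B(2) by blast
  then obtain D where D: "\<forall>b\<in>B. D b > 0 \<and> algebraic_integer (of_int (D b) * b)" by metis
  define w where "w = (\<lambda>b. of_int (D b) * b)"
  have wO: "w b \<in> OK" if "b \<in> B" for b
  proof (rule O_I)
    show "w b \<in> K" using that B(2) unfolding w_def by (intro nf_mult[OF nf] nf_of_int[OF nf]) auto
    show "algebraic_integer (w b)" using D that unfolding w_def by auto
  qed
  have wK: "w b \<in> K" if "b \<in> B" for b using O_K[OF wO[OF that]] .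
  define C0 where "C0 = (\<Sum>b\<in>B. house K (w b))"
  have "\<forall>x\<in>K. \<exists>\<rho>\<in>OK. house K (x - \<rho>) \<le> C0"
  proof
    fix x assume x: "x \<in> K"
    then obtain c where c: "\<forall>b\<in>B. c b \<in> \<rat>" "x = (\<Sum>b\<in>B. c b * b)" using B by blast
    define e where "e = (\<lambda>b. c b / of_int (D b))"
    have eQ: "e b \<in> \<rat>" if "b \<in> B" for b using c that unfolding e_def by auto
    have xe: "x = (\<Sum>b\<in>B. e b * w b)"
      unfolding c(2) e_def w_def by (rule sum.cong) (use D in auto)
    define m where "m = (\<lambda>b. \<lfloor>Re (e b)\<rfloor>)"
    define \<rho> where "\<rho> = (\<Sum>b\<in>B. of_int (m b) * w b)"
    have \<rho>O: "\<rho> \<in> OK" unfolding \<rho>_def by (intro O_sum O_mult O_of_int wO)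
    define t where "t = (\<lambda>b. e b - of_int (m b))"
    have tQ: "t b \<in> \<rat>" if "b \<in> B" for b using eQ[OF that] unfolding t_def by auto
    have tn: "cmod (t b) \<le> 1" if bB: "b \<in> B" for b
    proof -
      obtain a d where "e b = of_int a / of_int d" using Rats_cases'[OF eQ[OF bB]] by metis
      hence "e b = of_real (of_int a / of_int d)" by simp
      hence "e b = of_real (Re (e b))" by simp
      hence "t b = of_real (Re (e b) - of_int (m b))" unfolding t_def by simp
      hence "cmod (t b) = \<bar>Re (e b) - of_int \<lfloor>Re (e b)\<rfloor>\<bar>" unfolding m_def by (simp only: norm_of_real)
      also have "\<dots> \<le> 1" by (simp add: abs_le_iff) linarith
      finally show ?thesis .
    qed
    have xr: "x - \<rho> = (\<Sum>b\<in>B. t b * w b)"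
      unfolding xe \<rho>_def t_def by (simp add: sum_subtractf algebra_simps)
    have "house K (x - \<rho>) \<le> C0"
    proof (rule house_le[OF nf])
      fix \<sigma> assume s: "\<sigma> \<in> embeddings K"
      have "\<sigma> (x - \<rho>) = (\<Sum>b\<in>B. \<sigma> (t b * w b))"
        unfolding xr by (rule emb_sum[OF nf s]) (intro nf_mult[OF nf] nf_Rats[OF nf] tQ wK)
      also have "\<dots> = (\<Sum>b\<in>B. t b * \<sigma> (w b))"
        by (rule sum.cong) (simp_all add: emb_ratmult[OF nf s] tQ wK)
      finally have "cmod (\<sigma> (x - \<rho>)) \<le> (\<Sum>b\<in>B. cmod (t b * \<sigma> (w b)))"
        by (simp add: norm_sum)
      also have "\<dots> \<le> (\<Sum>b\<in>B. house K (w b))"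
      proof (rule sum_mono)
        fix b assume b: "b \<in> B"
        have "cmod (t b * \<sigma> (w b)) = cmod (t b) * cmod (\<sigma> (w b))" by (simp add: norm_mult)
        also have "\<dots> \<le> 1 * house K (w b)"
          by (rule mult_mono) (use tn[OF b] house_ge[OF nf s] in auto)
        finally show "cmod (t b * \<sigma> (w b)) \<le> house K (w b)" by simp
      qed
      finally show "cmod (\<sigma> (x - \<rho>)) \<le> C0" unfolding C0_def .
    qed
    thus "\<exists>\<rho>\<in>OK. house K (x - \<rho>) \<le> C0" using \<rho>O by blast
  qed
  thus ?thesis by blast
qed

end

definition Rset :: "complex set \<Rightarrow> complex \<Rightarrow> complex set" where
  "Rset K c = {r / c ^ k | r k. r \<in> ring_of_integers K}"

lemma tabs_le:
  assumes "\<forall>n. fps_nth f n = 0 \<longrightarrow> fps_nth g n = 0"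
  shows "tabs g \<le> tabs f"
proof (cases "g = 0")
  case True thus ?thesis unfolding tabs_def by simp
next
  case False
  have f0: "f \<noteq> 0"
  proof
    assume "f = 0"
    hence "\<forall>n. fps_nth g n = 0" using assms by simp
    hence "g = 0" by (intro fps_ext) simp
    thus False using False by simp
  qed
  have "fps_nth g (subdegree g) \<noteq> 0" using False by simp
  hence "fps_nth f (subdegree g) \<noteq> 0" using assms by blast
  hence "subdegree f \<le> subdegree g" by (rule subdegree_leI)
  thus ?thesis unfolding tabs_def using False f0 by simp
qed

context
  fixes K :: "complex set"
  assumes nf: "number_field K"
begin

abbreviation "OKK \<equiv> ring_of_integers K"

lemma bounded_small_growth:
  assumes "\<forall>n. house K (fps_nth f n) \<le> C"
  shows "small_growth K f"
proof -
  define C' where "C' = max C 1"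
  have C'0: "C' > 0" unfolding C'_def by simp
  have ev: "eventually (\<lambda>n. ereal (root n (house K (fps_nth f n))) \<le> ereal (root n C')) sequentially"
  proof (rule eventually_sequentiallyI[of 1])
    fix n :: nat assume "n \<ge> 1"
    hence "root n (house K (fps_nth f n)) \<le> root n C'"
      using assms unfolding C'_def by (subst real_root_le_iff) (auto intro: le_max_iff_disj[THEN iffD2])
    thus "ereal (root n (house K (fps_nth f n))) \<le> ereal (root n C')" by simp
  qed
  have "limsup (\<lambda>n. ereal (root n (house K (fps_nth f n)))) \<le> limsup (\<lambda>n. ereal (root n C'))"
    by (rule Limsup_mono[OF ev])
  also have "limsup (\<lambda>n. ereal (root n C')) = ereal 1"
    by (rule lim_imp_Limsup) (auto intro!: tendsto_ereal LIMSEQ_root_const C'0)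
  finally show ?thesis unfolding small_growth_def by (simp add: one_ereal_def)
qed

definition comax :: "complex \<Rightarrow> complex \<Rightarrow> bool" where
  "comax u v \<longleftrightarrow> (\<exists>X\<in>OKK. \<exists>Y\<in>OKK. u * X + v * Y = 1)"

lemma comaxI: "X \<in> OKK \<Longrightarrow> Y \<in> OKK \<Longrightarrow> u * X + v * Y = 1 \<Longrightarrow> comax u v"
  unfolding comax_def by blast

lemma comax_sym: "comax u v \<Longrightarrow> comax v u"
  unfolding comax_def by (auto simp: add.commute)

lemma comax_1: "comax u 1"
  unfolding comax_def using O_0[OF nf] O_1[OF nf] by (intro bexI[of _ 0] bexI[of _ 1]) auto

lemma comax_mult:
  assumes u: "u \<in> OKK" and v: "v \<in> OKK" and w: "w \<in> OKK"
    and "comax u v" "comax u w"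
  shows "comax u (v * w)"
proof -
  obtain X Y where XY: "X \<in> OKK" "Y \<in> OKK" "u * X + v * Y = 1" using assms(4) unfolding comax_def by blast
  obtain X' Y' where XY': "X' \<in> OKK" "Y' \<in> OKK" "u * X' + w * Y' = 1" using assms(5) unfolding comax_def by blast
  have "(u * X + v * Y) * (u * X' + w * Y') = 1" using XY XY' by simp
  hence "u * (X * u * X' + X * w * Y' + v * Y * X') + (v * w) * (Y * Y') = 1"
    by (simp add: algebra_simps)
  moreover have "X * u * X' + X * w * Y' + v * Y * X' \<in> OKK"
    using u v w XY XY' by (intro O_add[OF nf] O_mult[OF nf])
  moreover have "Y * Y' \<in> OKK" using XY XY' by (intro O_mult[OF nf])
  ultimately show ?thesis unfolding comax_def by blast
qed

lemma comax_pow: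
  assumes "u \<in> OKK" "v \<in> OKK" "comax u v"
  shows "comax u (v ^ k)"
proof (induction k)
  case 0 thus ?case using comax_1 by simp
next
  case (Suc k)
  have "comax u (v * v ^ k)" by (rule comax_mult[OF assms(1,2) O_power[OF nf assms(2)] assms(3) Suc])
  thus ?case by simp
qed

lemma comax_pow2:
  assumes "u \<in> OKK" "v \<in> OKK" "comax u v"
  shows "comax (u ^ k) (v ^ k)"
proof -
  have "comax v (u ^ k)" by (rule comax_pow[OF assms(2,1) comax_sym[OF assms(3)]])
  hence "comax (u ^ k) v" by (rule comax_sym)
  thus ?thesis by (rule comax_pow[OF O_power[OF nf assms(1)] assms(2)])
qed

lemma comax_prod:
  assumes "finite J" "u \<in> OKK" "\<forall>j\<in>J. a j \<in> OKK \<and> comax u (a j)"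
  shows "comax u (\<Prod>j\<in>J. a j)"
  using assms(1,3)
proof (induction J rule: finite_induct)
  case empty thus ?case using comax_1 by simp
next
  case (insert x F)
  have "comax u (a x * prod a F)"
    using insert by (intro comax_mult[OF assms(2)] O_prod[OF nf]) auto
  thus ?case using insert by simp
qed

lemma split_coeff:
  assumes C0: "\<forall>y\<in>K. \<exists>\<rho>\<in>OKK. house K (y - \<rho>) \<le> C0"
    and al: "\<alpha> \<in> OKK" "\<alpha> \<noteq> 0" and be: "\<beta> \<in> OKK" "\<beta> \<noteq> 0" and cm: "comax \<alpha> \<beta>"
    and x: "x \<in> Rset K (\<alpha> * \<beta>)"
  shows "\<exists>u v. u \<in> Rset K \<alpha> \<and> v \<in> Rset K \<beta> \<and>
     x = u + v \<and> (x = 0 \<longrightarrow> u = 0 \<and> v = 0) \<and> house K u \<le> C0"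
proof (cases "x = 0")
  case True
  have "house K 0 \<le> C0"
  proof -
    obtain \<rho> where "\<rho> \<in> OKK" "house K (0 - \<rho>) \<le> C0" using C0 nf_0[OF nf] by blast
    thus ?thesis using house_nonneg[OF nf, of "0 - \<rho>"] house_0[OF nf] by linarith
  qed
  moreover have "(0::complex) \<in> Rset K \<alpha>" "(0::complex) \<in> Rset K \<beta>"
    unfolding Rset_def using O_0[OF nf] by force+
  ultimately show ?thesis using True by (intro exI[of _ 0]) auto
next
  case False
  obtain r k where rk: "r \<in> OKK" "x = r / (\<alpha> * \<beta>) ^ k" using x unfolding Rset_def by blast
  obtain X Y where XY: "X \<in> OKK" "Y \<in> OKK" "\<alpha> ^ k * X + \<beta> ^ k * Y = 1"
    using comax_pow2[OF al(1) be(1) cm, of k] unfolding comax_def by blast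
  have ak: "\<alpha> ^ k \<noteq> 0" and bk: "\<beta> ^ k \<noteq> 0" using al be by simp_all
  have xs: "x = r * Y / \<alpha> ^ k + r * X / \<beta> ^ k"
  proof -
    have "x = r * (\<alpha> ^ k * X + \<beta> ^ k * Y) / (\<alpha> ^ k * \<beta> ^ k)" using rk XY(3) by (simp add: power_mult_distrib)
    also have "\<dots> = r * Y / \<alpha> ^ k + r * X / \<beta> ^ k" using ak bk by (simp add: field_simps)
    finally show ?thesis .
  qed
  have u0K: "r * Y / \<alpha> ^ k \<in> K"
    using rk XY al by (intro nf_divide[OF nf] nf_mult[OF nf] nf_power[OF nf] O_K[OF nf]) auto
  obtain \<rho> where \<rho>: "\<rho> \<in> OKK" "house K (r * Y / \<alpha> ^ k - \<rho>) \<le> C0" using C0 u0K by blast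
  define u where "u = r * Y / \<alpha> ^ k - \<rho>"
  define v where "v = r * X / \<beta> ^ k + \<rho>"
  have "u = (r * Y - \<rho> * \<alpha> ^ k) / \<alpha> ^ k" unfolding u_def using ak by (simp add: field_simps)
  moreover have "r * Y - \<rho> * \<alpha> ^ k \<in> OKK"
    using rk XY \<rho> al by (intro O_diff[OF nf] O_mult[OF nf] O_power[OF nf]) auto
  ultimately have uR: "u \<in> Rset K \<alpha>" unfolding Rset_def by blast
  have "v = (r * X + \<rho> * \<beta> ^ k) / \<beta> ^ k" unfolding v_def using bk by (simp add: field_simps)
  moreover have "r * X + \<rho> * \<beta> ^ k \<in> OKK"
    using rk XY \<rho> be by (intro O_add[OF nf] O_mult[OF nf] O_power[OF nf]) auto
  ultimately have vR: "v \<in> Rset K \<beta>" unfolding Rset_def by blast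
  have "x = u + v" unfolding u_def v_def xs by simp
  moreover have "house K u \<le> C0" unfolding u_def by (rule \<rho>(2))
  ultimately show ?thesis using uR vR False by blast
qed

end

theorem proposition2p16:
  fixes K :: "complex set"
  assumes "number_field K"
  shows "\<exists>C1 > 0. \<forall>(I :: nat set) (a :: nat \<Rightarrow> complex) (f :: complex fps) i.
     finite I \<longrightarrow> 1 \<in> I \<longrightarrow>
     (\<forall>j\<in>I. a j \<in> ring_of_integers K \<and> a j \<noteq> 0 \<and>
             \<not> (\<exists>b\<in>ring_of_integers K. a j * b = 1)) \<longrightarrow>
     (\<forall>j\<in>I. \<forall>k\<in>I. j \<noteq> k \<longrightarrow>
        (\<exists>x\<in>ring_of_integers K. \<exists>y\<in>ring_of_integers K. a j * x + a k * y = 1)) \<longrightarrow>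
     f \<in> DJ K a I \<longrightarrow> i \<in> I \<longrightarrow>
     (\<exists>g h. g \<in> DJ K a {i} \<and> h \<in> DJ K a (I - {i}) \<and> f = g + h \<and>
        tabs g \<le> tabs f \<and> tabs h \<le> tabs f \<and>
        (i = 1 \<longrightarrow> (\<forall>n. house K (fps_nth h n) < C1)) \<and>
        (i \<noteq> 1 \<longrightarrow> (\<forall>n. house K (fps_nth g n) < C1)))"
proof -
  note nf = assms
  obtain C0 where C0: "\<forall>y\<in>K. \<exists>\<rho>\<in>ring_of_integers K. house K (y - \<rho>) \<le> C0"
    using lattice[OF nf] by blast
  have C0pos: "0 \<le> C0"
  proof -
    obtain \<rho> where "house K (0 - \<rho>) \<le> C0" using C0 nf_0[OF nf] by blast
    thus ?thesis using house_nonneg[OF nf, of "0 - \<rho>"] by linarith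
  qed
  show ?thesis
  proof (intro exI[of _ "C0 + 1"] conjI allI impI)
    show "C0 + 1 > 0" using C0pos by simp
    fix I :: "nat set" and a :: "nat \<Rightarrow> complex" and f :: "complex fps" and i :: nat
    assume finI: "finite I" and oneI: "1 \<in> I"
      and aO: "\<forall>j\<in>I. a j \<in> ring_of_integers K \<and> a j \<noteq> 0 \<and> \<not> (\<exists>b\<in>ring_of_integers K. a j * b = 1)"
      and cop: "\<forall>j\<in>I. \<forall>k\<in>I. j \<noteq> k \<longrightarrow>
        (\<exists>x\<in>ring_of_integers K. \<exists>y\<in>ring_of_integers K. a j * x + a k * y = 1)"
      and fD: "f \<in> DJ K a I" and iI: "i \<in> I"
    define \<alpha> where "\<alpha> = a i"
    define \<beta> where "\<beta> = aJ a (I - {i})"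
    have alO: "\<alpha> \<in> ring_of_integers K" "\<alpha> \<noteq> 0" using aO iI unfolding \<alpha>_def by auto
    have beO: "\<beta> \<in> ring_of_integers K" unfolding \<beta>_def aJ_def
      by (rule O_prod[OF nf]) (use aO in auto)
    have be0: "\<beta> \<noteq> 0" unfolding \<beta>_def aJ_def using finI aO by (subst prod_zero_iff) auto
    have cm: "comax K \<alpha> \<beta>" unfolding \<beta>_def aJ_def
    proof (rule comax_prod[OF nf])
      show "finite (I - {i})" using finI by simp
      show "\<alpha> \<in> ring_of_integers K" by (rule alO(1))
      show "\<forall>j\<in>I - {i}. a j \<in> ring_of_integers K \<and> comax K \<alpha> (a j)"
      proof
        fix j assume j: "j \<in> I - {i}"
        hence jI: "j \<in> I" and ji: "i \<noteq> j" by auto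
        obtain x y where xy: "x \<in> ring_of_integers K" "y \<in> ring_of_integers K" "a i * x + a j * y = 1"
          using cop iI jI ji by blast
        have "comax K \<alpha> (a j)" unfolding \<alpha>_def by (rule comaxI[OF nf xy])
        thus "a j \<in> ring_of_integers K \<and> comax K \<alpha> (a j)" using aO jI by blast
      qed
    qed
    have aI: "aJ a I = \<alpha> * \<beta>" unfolding aJ_def \<alpha>_def \<beta>_def using prod.remove[OF finI iI, of a] by simp
    have RI: "RJ K a I = Rset K (\<alpha> * \<beta>)" unfolding RJ_def Rset_def aI ..
    have Ri: "RJ K a {i} = Rset K \<alpha>" unfolding RJ_def Rset_def aJ_def \<alpha>_def by simp
    have Rb: "RJ K a (I - {i}) = Rset K \<beta>" unfolding RJ_def Rset_def \<beta>_def ..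
    have fI: "fps_nth f n \<in> RJ K a I" for n using fD unfolding DJ_def by blast
    have fn: "fps_nth f n \<in> Rset K (\<alpha> * \<beta>)" for n using fI[of n] unfolding RI .
    have "\<forall>n. \<exists>uv. fst uv \<in> Rset K \<alpha> \<and> snd uv \<in> Rset K \<beta> \<and> fps_nth f n = fst uv + snd uv \<and>
        (fps_nth f n = 0 \<longrightarrow> fst uv = 0 \<and> snd uv = 0) \<and>
        (i = 1 \<longrightarrow> house K (snd uv) \<le> C0) \<and> (i \<noteq> 1 \<longrightarrow> house K (fst uv) \<le> C0)"
    proof
      fix n
      show "\<exists>uv. fst uv \<in> Rset K \<alpha> \<and> snd uv \<in> Rset K \<beta> \<and> fps_nth f n = fst uv + snd uv \<and>
        (fps_nth f n = 0 \<longrightarrow> fst uv = 0 \<and> snd uv = 0) \<and>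
        (i = 1 \<longrightarrow> house K (snd uv) \<le> C0) \<and> (i \<noteq> 1 \<longrightarrow> house K (fst uv) \<le> C0)"
      proof (cases "i = 1")
        case True
        have "fps_nth f n \<in> Rset K (\<beta> * \<alpha>)" using fn[of n] by (simp only: mult.commute[of \<beta> \<alpha>])
        from split_coeff[OF nf C0 beO be0 alO comax_sym[OF nf cm] this]
        obtain u v where uv: "u \<in> Rset K \<beta>" "v \<in> Rset K \<alpha>" "fps_nth f n = u + v"
          "fps_nth f n = 0 \<longrightarrow> u = 0 \<and> v = 0" "house K u \<le> C0" by blast
        have e: "fps_nth f n = v + u" using uv(3) by (simp add: add.commute)
        show ?thesis
        proof (rule exI[of _ "(v, u)"], unfold fst_conv snd_conv, intro conjI impI)
          show "v \<in> Rset K \<alpha>" by (rule uv(2))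
          show "u \<in> Rset K \<beta>" by (rule uv(1))
          show "fps_nth f n = v + u" by (rule e)
          show "v = 0" if "fps_nth f n = 0" using uv(4) that by simp
          show "u = 0" if "fps_nth f n = 0" using uv(4) that by simp
          show "house K u \<le> C0" by (rule uv(5))
          show "house K v \<le> C0" if "i \<noteq> 1" using that True by simp
        qed
      next
        case False
        from split_coeff[OF nf C0 alO beO be0 cm fn[of n]]
        obtain u v where uv: "u \<in> Rset K \<alpha>" "v \<in> Rset K \<beta>" "fps_nth f n = u + v"
          "fps_nth f n = 0 \<longrightarrow> u = 0 \<and> v = 0" "house K u \<le> C0" by blast
        show ?thesis
        proof (rule exI[of _ "(u, v)"], unfold fst_conv snd_conv, intro conjI impI)
          show "u \<in> Rset K \<alpha>" by (rule uv(1))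
          show "v \<in> Rset K \<beta>" by (rule uv(2))
          show "fps_nth f n = u + v" by (rule uv(3))
          show "u = 0" if "fps_nth f n = 0" using uv(4) that by simp
          show "v = 0" if "fps_nth f n = 0" using uv(4) that by simp
          show "house K u \<le> C0" by (rule uv(5))
          show "house K v \<le> C0" if "i = 1" using that False by simp
        qed
      qed
    qed
    hence "\<exists>UV. \<forall>n. fst (UV n) \<in> Rset K \<alpha> \<and> snd (UV n) \<in> Rset K \<beta> \<and> fps_nth f n = fst (UV n) + snd (UV n) \<and>
        (fps_nth f n = 0 \<longrightarrow> fst (UV n) = 0 \<and> snd (UV n) = 0) \<and>
        (i = 1 \<longrightarrow> house K (snd (UV n)) \<le> C0) \<and> (i \<noteq> 1 \<longrightarrow> house K (fst (UV n)) \<le> C0)"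
      by (rule choice)
    then obtain UV where UV: "\<forall>n. fst (UV n) \<in> Rset K \<alpha> \<and> snd (UV n) \<in> Rset K \<beta> \<and> fps_nth f n = fst (UV n) + snd (UV n) \<and>
        (fps_nth f n = 0 \<longrightarrow> fst (UV n) = 0 \<and> snd (UV n) = 0) \<and>
        (i = 1 \<longrightarrow> house K (snd (UV n)) \<le> C0) \<and> (i \<noteq> 1 \<longrightarrow> house K (fst (UV n)) \<le> C0)" ..
    have P1: "fst (UV n) \<in> Rset K \<alpha>" for n using spec[OF UV, of n] by (elim conjE)
    have P2: "snd (UV n) \<in> Rset K \<beta>" for n using spec[OF UV, of n] by (elim conjE)
    have P3: "fps_nth f n = fst (UV n) + snd (UV n)" for n using spec[OF UV, of n] by (elim conjE)
    have P4: "fps_nth f n = 0 \<longrightarrow> fst (UV n) = 0 \<and> snd (UV n) = 0" for n using spec[OF UV, of n] by (elim conjE)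
    have P5: "i = 1 \<longrightarrow> house K (snd (UV n)) \<le> C0" for n using spec[OF UV, of n] by (elim conjE)
    have P6: "i \<noteq> 1 \<longrightarrow> house K (fst (UV n)) \<le> C0" for n using spec[OF UV, of n] by (elim conjE)
    define g where "g = Abs_fps (\<lambda>n. fst (UV n))"
    define h where "h = Abs_fps (\<lambda>n. snd (UV n))"
    have gn: "fps_nth g n = fst (UV n)" for n unfolding g_def by simp
    have hn: "fps_nth h n = snd (UV n)" for n unfolding h_def by simp
    have gD: "g \<in> DJ K a {i}"
      unfolding DJ_def
    proof (intro CollectI conjI allI impI)
      fix n show "fps_nth g n \<in> RJ K a {i}" unfolding Ri gn by (rule P1)
    next
      assume "1 \<notin> {i}"
      hence "i \<noteq> 1" by auto
      hence "\<forall>n. house K (fps_nth g n) \<le> C0" unfolding gn using P6 by simp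
      thus "small_growth K g" by (rule bounded_small_growth[OF nf])
    qed
    have hD: "h \<in> DJ K a (I - {i})"
      unfolding DJ_def
    proof (intro CollectI conjI allI impI)
      fix n show "fps_nth h n \<in> RJ K a (I - {i})" unfolding Rb hn by (rule P2)
    next
      assume "1 \<notin> I - {i}"
      hence "i = 1" using oneI by auto
      hence "\<forall>n. house K (fps_nth h n) \<le> C0" unfolding hn using P5 by simp
      thus "small_growth K h" by (rule bounded_small_growth[OF nf])
    qed
    have fgh: "f = g + h" by (rule fps_ext) (simp add: P3 gn hn)
    have tg: "tabs g \<le> tabs f" by (rule tabs_le) (use P4 gn in simp)
    have th: "tabs h \<le> tabs f" by (rule tabs_le) (use P4 hn in simp)
    have bh: "i = 1 \<longrightarrow> (\<forall>n. house K (fps_nth h n) < C0 + 1)"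
    proof (intro impI allI)
      fix n assume "i = 1"
      hence "house K (fps_nth h n) \<le> C0" unfolding hn using P5 by simp
      thus "house K (fps_nth h n) < C0 + 1" by linarith
    qed
    have bg: "i \<noteq> 1 \<longrightarrow> (\<forall>n. house K (fps_nth g n) < C0 + 1)"
    proof (intro impI allI)
      fix n assume "i \<noteq> 1"
      hence "house K (fps_nth g n) \<le> C0" unfolding gn using P6 by simp
      thus "house K (fps_nth g n) < C0 + 1" by linarith
    qed
    show "\<exists>g h. g \<in> DJ K a {i} \<and> h \<in> DJ K a (I - {i}) \<and> f = g + h \<and>
        tabs g \<le> tabs f \<and> tabs h \<le> tabs f \<and>
        (i = 1 \<longrightarrow> (\<forall>n. house K (fps_nth h n) < C0 + 1)) \<and>
        (i \<noteq> 1 \<longrightarrow> (\<forall>n. house K (fps_nth g n) < C0 + 1))"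
      using gD hD fgh tg th bh bg by blast
  qed
qed

end
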